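(* Let $u\in(0,1]$, $\beta\in(0,1)$ and $\tau_k\triangleq\lceil(k+1)^u\rceil$ for $k\ge0$. Then for every $k\ge1$, $$\sum_{s=1}^k\beta^{\sum_{p=s}^k\tau_p}\le e\big(\ln(\beta^{-1/(u+1)})\big)^{-\frac{1}{u+1}}\beta^{\frac{(k+1)^{u+1}}{u+1}}+\beta^{\frac{(k+1)^{u+1}-k^{u+1}}{u+1}}\Big(1+\frac{u+1}{k^u\ln(1/\beta)}\Big).$$ *)

theory Defs
  imports Complex_Main
begin

definition tau :: "real \<Rightarrow> nat \<Rightarrow> nat" where
  "tau u k = nat \<lceil>(real k + 1) powr u\<rceil>"

end

theory Submission
  imports Defs
begin

lemma conv_step:
  fixes u p :: real
  assumes "0 < u" "1 \<le> p"
  shows "(p+1) powr (u+1) - p powr (u+1) \<le> (u+1) * (p+1) powr u"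
proof -
  have "\<exists>z. p < z \<and> z < p+1 \<and> (p+1) powr (u+1) - p powr (u+1) = ((p+1) - p) * ((u+1) * z powr (u+1-1))"
    apply (rule MVT2[where f="\<lambda>x. x powr (u+1)"])
    using assms has_real_derivative_powr[of _ "u+1"] by auto
  then obtain z where z: "p < z" "z < p+1" "(p+1) powr (u+1) - p powr (u+1) = (u+1) * z powr u" by auto
  have "z powr u \<le> (p+1) powr u" using z assms by (intro powr_mono2) auto
  then show ?thesis using z(3) assms by simp
qed

definition gg :: "real \<Rightarrow> real \<Rightarrow> real \<Rightarrow> real" where
  "gg c u x = exp (c * x powr (u+1)) * x powr (-u) / c"

lemma gg_deriv:
  assumes "0 < x" "0 < c"
  shows "(gg c u has_real_derivative
     (exp (c * x powr (u+1)) * (u+1) - u * exp (c * x powr (u+1)) / (c * x powr (u+1)))) (at x)"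
proof -
  have "(gg c u has_real_derivative
     (exp (c * x powr (u+1)) * (c * ((u+1) * x powr (u+1-1))) * x powr (-u) + exp (c * x powr (u+1)) * (-u * x powr (-u-1))) / c) (at x)"
    unfolding gg_def fun_eq_iff
    using assms
    by (auto intro!: derivative_eq_intros has_real_derivative_powr)
  moreover have "(exp (c * x powr (u+1)) * (c * ((u+1) * x powr (u+1-1))) * x powr (-u) + exp (c * x powr (u+1)) * (-u * x powr (-u-1))) / c
     = exp (c * x powr (u+1)) * (u+1) - u * exp (c * x powr (u+1)) / (c * x powr (u+1))"
  proof -
    have a: "x powr (-u) = 1 / x powr u" using assms by (simp add: powr_minus_divide)
    have b: "x powr (-u-1) = 1 / x powr (u+1)" using assms
      by (simp add: powr_minus_divide[symmetric] powr_minus)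
    have p: "x powr u > 0" "x powr (u+1) > 0" using assms by auto
    show ?thesis unfolding a b using assms p by (simp add: field_simps)
  qed
  ultimately show ?thesis by simp
qed

lemma gg_step:
  fixes c u s :: real
  assumes "0 < c" "0 < u" "1 \<le> s" "1 \<le> c * s powr (u+1)"
  shows "exp (c * s powr (u+1)) \<le> gg c u (s+1) - gg c u s"
proof -
  define D where "D = (\<lambda>x. exp (c * x powr (u+1)) * (u+1) - u * exp (c * x powr (u+1)) / (c * x powr (u+1)))"
  have der: "\<And>x. s \<le> x \<Longrightarrow> x \<le> s+1 \<Longrightarrow> (gg c u has_real_derivative D x) (at x)"
  proof -
    fix x assume "s \<le> x" "x \<le> s+1"
    then have "0 < x" using assms by linarith
    then show "(gg c u has_real_derivative D x) (at x)" unfolding D_def using gg_deriv[of x c u] assms(1) by blast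
  qed
  have "s < s+1" by simp
  from MVT2[OF this der] obtain z where z: "s < z" "z < s+1" "gg c u (s+1) - gg c u s = (s+1-s) * D z"
    by blast
  have zp: "s powr (u+1) \<le> z powr (u+1)" using z assms by (intro powr_mono2) auto
  have "c * s powr (u+1) \<le> c * z powr (u+1)" using zp assms(1) by (intro mult_left_mono) auto
  then have cz: "1 \<le> c * z powr (u+1)" using assms(4) by linarith
  have e1: "exp (c * s powr (u+1)) \<le> exp (c * z powr (u+1))" using zp assms by simp
  define E where "E = exp (c * z powr (u+1))"
  define W where "W = c * z powr (u+1)"
  have Ep: "0 < E" unfolding E_def by simp
  have a0: "0 \<le> u * E" using Ep assms by simp
  have "u * E \<le> u * E * W" using a0 cz unfolding W_def by (metis mult_left_mono mult.right_neutral)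
  then have d: "u * E / W \<le> u * E" using cz unfolding W_def by (simp add: pos_divide_le_eq)
  have "D z = E * (u+1) - u * E / W" unfolding D_def E_def W_def by simp
  then have "E \<le> D z" using d by (simp add: algebra_simps)
  moreover have "gg c u (s+1) - gg c u s = D z" using z(3) by simp
  ultimately show ?thesis using e1 unfolding E_def by linarith
qed

lemma gg_pos: "0 < c \<Longrightarrow> 0 < x \<Longrightarrow> 0 < gg c u x"
  unfolding gg_def by auto

lemma x0_facts:
  fixes c u s :: real
  assumes "0 < c" "0 < u" "0 \<le> s"
  shows "s < c powr (-1/(u+1)) \<Longrightarrow> c * s powr (u+1) < 1"
    and "c powr (-1/(u+1)) \<le> s \<Longrightarrow> 1 \<le> c * s powr (u+1)"
proof -
  have e0: "(c powr (-1/(u+1))) powr (u+1) = c powr (-1/(u+1) * (u+1))" by (rule powr_powr)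
  have e1: "-1/(u+1) * (u+1) = -1" using assms by (simp add: field_simps)
  have e: "(c powr (-1/(u+1))) powr (u+1) = 1 / c"
    unfolding e0 e1 using assms by (simp add: powr_minus_divide)
  show "s < c powr (-1/(u+1)) \<Longrightarrow> c * s powr (u+1) < 1"
  proof -
    assume "s < c powr (-1/(u+1))"
    then have "s powr (u+1) < 1 / c" using assms e
      by (metis powr_less_mono2 add_pos_pos zero_less_one)
    then show ?thesis using assms by (simp add: field_simps)
  qed
  show "c powr (-1/(u+1)) \<le> s \<Longrightarrow> 1 \<le> c * s powr (u+1)"
  proof -
    assume "c powr (-1/(u+1)) \<le> s"
    then have "1 / c \<le> s powr (u+1)" using assms e
      by (metis powr_mono2 add_pos_pos zero_less_one less_imp_le powr_ge_zero)
    then show ?thesis using assms by (simp add: field_simps)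
  qed
qed

lemma sum_bound:
  fixes c u :: real and n :: nat
  assumes "0 < c" "0 < u" "1 \<le> n"
  shows "(\<Sum>s=1..<n. exp (c * real s powr (u+1)))
     \<le> exp 1 * min (real n - 1) (c powr (-1/(u+1)))
       + (if c powr (-1/(u+1)) \<le> real n then gg c u (real n) else 0)"
  using assms(3)
proof (induction n rule: dec_induct)
  case base
  then show ?case using assms gg_pos[of c 1 u] by auto
next
  case (step n)
  define x0 where "x0 = c powr (-1/(u+1))"
  have x0p: "0 < x0" unfolding x0_def using assms by auto
  have IH: "(\<Sum>s=1..<n. exp (c * real s powr (u+1)))
     \<le> exp 1 * min (real n - 1) x0 + (if x0 \<le> real n then gg c u (real n) else 0)"
    using step.IH unfolding x0_def .
  have split: "(\<Sum>s=1..<Suc n. exp (c * real s powr (u+1))) = (\<Sum>s=1..<n. exp (c * real s powr (u+1))) + exp (c * real n powr (u+1))"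
    using step.hyps by simp
  show ?case
  proof (cases "x0 \<le> real n")
    case True
    have st: "exp (c * real n powr (u+1)) \<le> gg c u (real n + 1) - gg c u (real n)"
      using gg_step[of c u "real n"] x0_facts(2)[of c u "real n"] assms step.hyps True
      unfolding x0_def by auto
    have IH': "(\<Sum>s=1..<n. exp (c * real s powr (u+1))) \<le> exp 1 * min (real n - 1) x0 + gg c u (real n)"
      using IH True by simp
    have m: "exp 1 * min (real n - 1) x0 \<le> exp 1 * x0" by simp
    have m2: "min (real n + 1 - 1) x0 = x0" using True by simp
    have r: "real (Suc n) = real n + 1" by simp
    have "(\<Sum>s=1..<Suc n. exp (c * real s powr (u+1))) \<le> exp 1 * min (real (Suc n) - 1) x0 + gg c u (real (Suc n))"
      unfolding split r m2 using IH' st m by linarith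
    then show ?thesis using True unfolding x0_def[symmetric] by auto
  next
    case False
    have st: "exp (c * real n powr (u+1)) \<le> exp 1"
      using x0_facts(1)[of c u "real n"] assms False unfolding x0_def by auto
    have m1: "min (real n - 1) x0 = real n - 1" using False by auto
    have m2: "min (real (Suc n) - 1) x0 = real n" using False by auto
    have g: "0 \<le> (if x0 \<le> real (Suc n) then gg c u (real (Suc n)) else 0)"
      using gg_pos[of c "real (Suc n)" u] assms by auto
    have IH': "(\<Sum>s=1..<n. exp (c * real s powr (u+1))) \<le> exp 1 * (real n - 1)"
      using IH False m1 by simp
    have "(\<Sum>s=1..<Suc n. exp (c * real s powr (u+1))) \<le> exp 1 * real n"
    proof -
      have "exp 1 * (real n - 1) = exp 1 * real n - exp 1" by (simp add: algebra_simps)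
      then show ?thesis unfolding split using IH' st by linarith
    qed
    then show ?thesis unfolding x0_def[symmetric] m2 by (rule add_increasing2[OF g])
  qed
qed


lemma tau_sum_lower:
  fixes u :: real and s k :: nat
  assumes "0 < u" "1 \<le> s" "s \<le> k"
  shows "((real k + 1) powr (u+1) - real s powr (u+1)) / (u+1) \<le> real (\<Sum>p=s..k. tau u p)"
proof -
  have tel: "(\<Sum>p=s..k. real (Suc p) powr (u+1) - real p powr (u+1)) = real (Suc k) powr (u+1) - real s powr (u+1)"
    by (rule sum_Suc_diff) (use assms in auto)
  have "(\<Sum>p=s..k. real (Suc p) powr (u+1) - real p powr (u+1)) \<le> (\<Sum>p=s..k. (u+1) * (real p + 1) powr u)"
  proof (rule sum_mono)
    fix p assume "p \<in> {s..k}"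
    then have "1 \<le> real p" using assms by auto
    then show "real (Suc p) powr (u+1) - real p powr (u+1) \<le> (u+1) * (real p + 1) powr u"
      using conv_step[of u "real p"] assms by (simp add: add.commute)
  qed
  also have "\<dots> \<le> (\<Sum>p=s..k. (u+1) * real (tau u p))"
  proof (rule sum_mono)
    fix p
    have "(real p + 1) powr u \<le> real (tau u p)" unfolding tau_def
    proof -
      have "0 \<le> (real p + 1) powr u" by simp
      then have "0 \<le> \<lceil>(real p + 1) powr u\<rceil>" by linarith
      then have "real (nat \<lceil>(real p + 1) powr u\<rceil>) = real_of_int \<lceil>(real p + 1) powr u\<rceil>"
        by simp
      then show "(real p + 1) powr u \<le> real (nat \<lceil>(real p + 1) powr u\<rceil>)"
        using le_of_int_ceiling by simp
    qed
    then show "(u+1) * (real p + 1) powr u \<le> (u+1) * real (tau u p)" using assms by simp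
  qed
  also have "\<dots> = (u+1) * real (\<Sum>p=s..k. tau u p)" by (simp add: sum_distrib_left)
  finally have "(real k + 1) powr (u+1) - real s powr (u+1) \<le> (u+1) * real (\<Sum>p=s..k. tau u p)"
    using tel by (simp add: add.commute)
  then show ?thesis using assms by (simp add: field_simps)
qed

lemma aux_id: "(a::real) \<noteq> 0 \<Longrightarrow> (K - S) / a * (- L) = - (L / a) * K + L / a * S"
  by (simp add: field_simps)

theorem lemma7:
  fixes u \<beta> :: real and k :: nat
  assumes "0 < u" "u \<le> 1" "0 < \<beta>" "\<beta> < 1" "1 \<le> k"
  shows "(\<Sum>s=1..k. \<beta> ^ (\<Sum>p=s..k. tau u p))
    \<le> exp 1 * (ln (\<beta> powr (-1 / (u + 1)))) powr (-1 / (u + 1))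
         * \<beta> powr ((real k + 1) powr (u + 1) / (u + 1))
      + \<beta> powr (((real k + 1) powr (u + 1) - real k powr (u + 1)) / (u + 1))
         * (1 + (u + 1) / (real k powr u * ln (1 / \<beta>)))"
proof -
  define L where "L = ln (1 / \<beta>)"
  have lnb: "ln \<beta> = - L" unfolding L_def using assms by (simp add: ln_div)
  have Lp: "0 < L" unfolding L_def using assms by simp
  define c where "c = L / (u+1)"
  have cp: "0 < c" unfolding c_def using Lp assms by simp
  define K where "K = (real k + 1) powr (u+1)"
  define f where "f = (\<lambda>x::real. exp (c * x powr (u+1)))"
  define x0 where "x0 = c powr (-1/(u+1))"
  have x0p: "0 < x0" unfolding x0_def using cp by simp
  have termb: "\<beta> ^ (\<Sum>p=s..k. tau u p) \<le> exp (- c * K) * f (real s)" if s: "s \<in> {1..k}" for s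
  proof -
    define N where "N = (\<Sum>p=s..k. tau u p)"
    have N: "(K - real s powr (u+1)) / (u+1) \<le> real N"
      unfolding N_def K_def using tau_sum_lower[of u s k] assms s by auto
    have "\<beta> ^ N = exp (real N * ln \<beta>)"
      using assms by (simp add: exp_of_nat_mult)
    also have "\<dots> \<le> exp ((K - real s powr (u+1)) / (u+1) * ln \<beta>)"
    proof -
      have "(K - real s powr (u+1)) / (u+1) * L \<le> real N * L"
        by (rule mult_right_mono[OF N]) (use Lp in simp)
      then show ?thesis using lnb by simp
    qed
    also have "(K - real s powr (u+1)) / (u+1) * ln \<beta> = - c * K + c * real s powr (u+1)"
      unfolding lnb c_def using aux_id[of "u+1" K "real s powr (u+1)" L] assms by simp
    also have "exp (- c * K + c * real s powr (u+1)) = exp (- c * K) * f (real s)"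
      unfolding f_def by (rule exp_add)
    finally show ?thesis unfolding N_def .
  qed
  have "(\<Sum>s=1..k. \<beta> ^ (\<Sum>p=s..k. tau u p)) \<le> (\<Sum>s=1..k. exp (- c * K) * f (real s))"
    by (rule sum_mono) (rule termb)
  also have "\<dots> = exp (- c * K) * ((\<Sum>s=1..<k. f (real s)) + f (real k))"
  proof -
    have "{1..k} = {1..<Suc k}" by auto
    then have "(\<Sum>s=1..k. f (real s)) = (\<Sum>s=1..<k. f (real s)) + f (real k)"
      using assms by simp
    then show ?thesis by (simp add: sum_distrib_left[symmetric])
  qed
  also have "\<dots> \<le> exp (- c * K) * (exp 1 * x0 + gg c u (real k) + f (real k))"
  proof -
    have sb: "(\<Sum>s=1..<k. f (real s)) \<le> exp 1 * min (real k - 1) x0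
       + (if x0 \<le> real k then gg c u (real k) else 0)"
      unfolding f_def x0_def using sum_bound[of c u k] cp assms by simp
    have "exp 1 * min (real k - 1) x0 \<le> exp 1 * x0" by simp
    moreover have "(if x0 \<le> real k then gg c u (real k) else 0) \<le> gg c u (real k)"
      using gg_pos[of c "real k" u] cp assms by auto
    ultimately have "(\<Sum>s=1..<k. f (real s)) \<le> exp 1 * x0 + gg c u (real k)"
      using sb by linarith
    then show ?thesis by simp
  qed
  also have "\<dots> = exp 1 * x0 * exp (- c * K) + exp (- c * K) * f (real k) * (1 + (u+1) / (real k powr u * L))"
  proof -
    have kp: "0 < real k powr u" using assms by simp
    have "gg c u (real k) = f (real k) * ((u+1) / (real k powr u * L))"
      unfolding gg_def f_def c_def using kp Lp assms
      by (simp add: powr_minus field_simps)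
    then show ?thesis by (simp add: algebra_simps)
  qed
  also have "\<dots> = exp 1 * (ln (\<beta> powr (-1 / (u + 1)))) powr (-1 / (u + 1))
         * \<beta> powr ((real k + 1) powr (u + 1) / (u + 1))
      + \<beta> powr (((real k + 1) powr (u + 1) - real k powr (u + 1)) / (u + 1))
         * (1 + (u + 1) / (real k powr u * ln (1 / \<beta>)))"
  proof -
    have e1: "ln (\<beta> powr (-1 / (u + 1))) = c"
      unfolding c_def using lnb assms by (simp add: field_simps)
    have e2: "\<beta> powr ((real k + 1) powr (u + 1) / (u + 1)) = exp (- c * K)"
      unfolding powr_def K_def c_def using assms lnb by (simp add: field_simps)
    have pb: "\<And>y. \<beta> powr y = exp (y * ln \<beta>)" using assms by (simp add: powr_def)
    have e3': "\<beta> powr ((K - real k powr (u + 1)) / (u + 1)) = exp (- c * K) * f (real k)"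
    proof -
      have "(K - real k powr (u+1)) / (u+1) * ln \<beta> = - c * K + c * real k powr (u+1)"
        unfolding lnb c_def using aux_id[of "u+1" K "real k powr (u+1)" L] assms by simp
      then show ?thesis unfolding pb f_def by (simp only: exp_add)
    qed
    have e3: "\<beta> powr (((real k + 1) powr (u + 1) - real k powr (u + 1)) / (u + 1)) = exp (- c * K) * f (real k)"
      using e3' unfolding K_def .
    show ?thesis unfolding e1 e2 e3 x0_def L_def by simp
  qed
  finally show ?thesis .
qed

end
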